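(* Let $p(x,y)=\sum_{i=1}^s a_i x^{\alpha_i}y^{\beta_i}\not\equiv 0$ be a real polynomial with $a_i\neq 0$, distinct exponent vectors $(\alpha_i,\beta_i)\in(\mathbb{N}\cup\{0\})^2$, and $p(0,0)=0$, and suppose there are $A=(A_1,A_2)\in\mathbb{Z}^2$ and $B\in\mathbb{Z}$ with $A_1\alpha_i+A_2\beta_i=B$ for all $i$, where one of the following holds: (a) $A_1>0$, $A_2<0$; (b) $A_1=0$, $A_2>0$; (c) $A_1>0$, $A_2=0$. In cases (a) and (b) index the terms so that $\alpha_1<\alpha_2<\dots<\alpha_s$; in case (c) index them so that $\beta_1<\beta_2<\dots<\beta_s$. Then $(0,0)$ is a point of local minimum of $p$ if and only if $a_1>0$ and $\alpha_1,\beta_1$ are even nonnegative integers.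
   Context: A point of local minimum of $p$ at $(0,0)$ means $p(x,y)\ge p(0,0)$ for all $(x,y)$ in some neighborhood of $(0,0)$. *)

theory Defs
  imports "HOL-Analysis.Analysis"
begin

definition bipoly :: "nat \<Rightarrow> (nat \<Rightarrow> real) \<Rightarrow> (nat \<Rightarrow> nat) \<Rightarrow> (nat \<Rightarrow> nat) \<Rightarrow> real \<Rightarrow> real \<Rightarrow> real" where
  "bipoly s a \<alpha> \<beta> x y = (\<Sum>i=1..s. a i * x ^ \<alpha> i * y ^ \<beta> i)"

definition local_min_at_origin :: "(real \<Rightarrow> real \<Rightarrow> real) \<Rightarrow> bool" where
  "local_min_at_origin p \<longleftrightarrow> (\<forall>\<^sub>F z in nhds ((0::real), (0::real)). p (fst z) (snd z) \<ge> p 0 0)"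

end

theory Submission imports Defs begin

lemma analytic:
  fixes r p :: "real \<times> real \<Rightarrow> real" and a1 :: real and m n :: nat
  assumes rsmall: "\<forall>\<^sub>F z in nhds (0,0). \<bar>r z\<bar> < \<bar>a1\<bar>"
    and a1: "a1 \<noteq> 0"
    and pf: "\<And>z. p z = fst z ^ m * snd z ^ n * (a1 + r z)"
    and p0: "p (0,0) = 0"
  shows "(\<forall>\<^sub>F z in nhds (0,0). p z \<ge> p (0,0)) \<longleftrightarrow> a1 > 0 \<and> even m \<and> even n"
proof
  assume H: "\<forall>\<^sub>F z in nhds (0,0). p z \<ge> p (0,0)"
  have key: "\<exists>t>0. 0 \<le> (c1*t)^m * (c2*t)^n * (a1 + r (c1*t, c2*t)) \<and> \<bar>r (c1*t, c2*t)\<bar> < \<bar>a1\<bar>" for c1 c2 :: real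
  proof -
    have lim: "((\<lambda>t. (c1*t, c2*t)) \<longlongrightarrow> (0,0)) (at_right (0::real))"
    proof -
      have "((\<lambda>t. (c1*t, c2*t)) \<longlongrightarrow> (c1*0, c2*0)) (at_right (0::real))"
        by (intro tendsto_intros)
      then show ?thesis by simp
    qed
    have "\<forall>\<^sub>F z in nhds (0,0). p z \<ge> 0 \<and> \<bar>r z\<bar> < \<bar>a1\<bar>"
      using H rsmall p0 by (auto elim: eventually_elim2)
    then have "\<forall>\<^sub>F t in at_right 0. p (c1*t, c2*t) \<ge> 0 \<and> \<bar>r (c1*t, c2*t)\<bar> < \<bar>a1\<bar>"
      using lim by (auto simp: filterlim_iff)
    moreover have "\<forall>\<^sub>F t in at_right (0::real). t > 0" by (simp add: eventually_at_right_less)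
    ultimately have "\<forall>\<^sub>F t in at_right (0::real). t > 0 \<and> p (c1*t, c2*t) \<ge> 0 \<and> \<bar>r (c1*t, c2*t)\<bar> < \<bar>a1\<bar>"
      by (auto elim: eventually_elim2)
    then obtain t where "t > 0 \<and> p (c1*t, c2*t) \<ge> 0 \<and> \<bar>r (c1*t, c2*t)\<bar> < \<bar>a1\<bar>"
      using eventually_happens trivial_limit_at_right_real by blast
    then show ?thesis using pf by (metis fst_conv snd_conv)
  qed
  have apos: "a1 > 0"
  proof -
    obtain t where t: "t > 0" "0 \<le> (1*t)^m * (1*t)^n * (a1 + r (1*t, 1*t))" "\<bar>r (1*t, 1*t)\<bar> < \<bar>a1\<bar>"
      using key by blast
    have "(1*t)^m * (1*t)^n > 0" using t(1) by simp
    then have "a1 + r (1*t, 1*t) \<ge> 0" using t(2) by (simp add: zero_le_mult_iff)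
    then show ?thesis using t(3) a1 by linarith
  qed
  have em: "even m"
  proof (rule ccontr)
    assume o: "odd m"
    obtain t where t: "t > 0" "0 \<le> (-1*t)^m * (1*t)^n * (a1 + r (-1*t, 1*t))" "\<bar>r (-1*t, 1*t)\<bar> < \<bar>a1\<bar>"
      using key by blast
    have "(-1*t)^m < 0" using t(1) o by (simp add: power_minus_odd)
    moreover have "(1*t)^n > 0" using t(1) by simp
    moreover have "a1 + r (-1*t, 1*t) > 0" using t(3) apos by linarith
    ultimately have "(-1*t)^m * (1*t)^n * (a1 + r (-1*t, 1*t)) < 0"
      by (simp add: mult_neg_pos)
    then show False using t(2) by linarith
  qed
  have en: "even n"
  proof (rule ccontr)
    assume o: "odd n"
    obtain t where t: "t > 0" "0 \<le> (1*t)^m * (-1*t)^n * (a1 + r (1*t, -1*t))" "\<bar>r (1*t, -1*t)\<bar> < \<bar>a1\<bar>"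
      using key by blast
    have "(-1*t)^n < 0" using t(1) o by (simp add: power_minus_odd)
    moreover have "(1*t)^m > 0" using t(1) by simp
    moreover have "a1 + r (1*t, -1*t) > 0" using t(3) apos by linarith
    ultimately have "(1*t)^m * (-1*t)^n * (a1 + r (1*t, -1*t)) < 0"
      by (simp add: mult_pos_neg mult_neg_pos)
    then show False using t(2) by linarith
  qed
  show "a1 > 0 \<and> even m \<and> even n" using apos em en by blast
next
  assume H: "a1 > 0 \<and> even m \<and> even n"
  show "\<forall>\<^sub>F z in nhds (0,0). p z \<ge> p (0,0)"
    using rsmall
  proof (rule eventually_mono)
    fix z :: "real \<times> real" assume "\<bar>r z\<bar> < \<bar>a1\<bar>"
    then have "a1 + r z > 0" using H by linarith
    moreover have "fst z ^ m \<ge> 0" "snd z ^ n \<ge> 0" using H by (auto simp: zero_le_even_power)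
    ultimately have "p z \<ge> 0" using pf by simp
    then show "p z \<ge> p (0,0)" using p0 by simp
  qed
qed

theorem mainTheorem4:
  fixes s :: nat and a :: "nat \<Rightarrow> real" and \<alpha> \<beta> :: "nat \<Rightarrow> nat"
    and A1 A2 B :: int
  assumes s_pos: "s \<ge> 1"
    and a_nz: "\<forall>i\<in>{1..s}. a i \<noteq> 0"
    and distinct_exps: "inj_on (\<lambda>i. (\<alpha> i, \<beta> i)) {1..s}"
    and p00: "bipoly s a \<alpha> \<beta> 0 0 = 0"
    and weights: "\<forall>i\<in>{1..s}. A1 * int (\<alpha> i) + A2 * int (\<beta> i) = B"
    and cases_order:
      "(((A1 > 0 \<and> A2 < 0) \<or> (A1 = 0 \<and> A2 > 0)) \<and> strict_mono_on {1..s} \<alpha>)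
       \<or> ((A1 > 0 \<and> A2 = 0) \<and> strict_mono_on {1..s} \<beta>)"
  shows "local_min_at_origin (bipoly s a \<alpha> \<beta>) \<longleftrightarrow> a 1 > 0 \<and> even (\<alpha> 1) \<and> even (\<beta> 1)"
proof -
  have dom: "\<alpha> 1 \<le> \<alpha> i \<and> \<beta> 1 \<le> \<beta> i \<and> (\<alpha> 1 < \<alpha> i \<or> \<beta> 1 < \<beta> i)" if i: "i \<in> {2..s}" for i
  proof -
    have i1: "1 \<in> {1..s}" "i \<in> {1..s}" "1 < i" using i s_pos by auto
    have w: "A1 * int (\<alpha> 1) + A2 * int (\<beta> 1) = A1 * int (\<alpha> i) + A2 * int (\<beta> i)"
      using weights i1 by simp
    show ?thesis
    proof (cases "((A1 > 0 \<and> A2 < 0) \<or> (A1 = 0 \<and> A2 > 0)) \<and> strict_mono_on {1..s} \<alpha>")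
      case True
      then have lt: "\<alpha> 1 < \<alpha> i" using i1 by (auto simp: strict_mono_on_def)
      have "\<beta> 1 \<le> \<beta> i"
      proof (cases "A1 > 0 \<and> A2 < 0")
        case True
        have "A2 * (int (\<beta> 1) - int (\<beta> i)) = A1 * (int (\<alpha> i) - int (\<alpha> 1))" using w by (simp add: algebra_simps)
        moreover have "A1 * (int (\<alpha> i) - int (\<alpha> 1)) > 0" using True lt by simp
        ultimately have "A2 * (int (\<beta> 1) - int (\<beta> i)) > 0" by simp
        then have "int (\<beta> 1) - int (\<beta> i) < 0" using True by (simp add: zero_less_mult_iff)
        then show ?thesis by simp
      next
        case False
        then have "A1 = 0" "A2 > 0" using \<open>((A1 > 0 \<and> A2 < 0) \<or> (A1 = 0 \<and> A2 > 0)) \<and> strict_mono_on {1..s} \<alpha>\<close> by auto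
        then show ?thesis using w by simp
      qed
      then show ?thesis using lt by simp
    next
      case False
      then have c: "A1 > 0" "A2 = 0" "strict_mono_on {1..s} \<beta>" using cases_order by auto
      then have "\<beta> 1 < \<beta> i" using i1 by (auto simp: strict_mono_on_def)
      moreover have "\<alpha> 1 = \<alpha> i" using w c by simp
      ultimately show ?thesis by simp
    qed
  qed
  define R where "R z = (\<Sum>i=2..s. a i * fst z ^ (\<alpha> i - \<alpha> 1) * snd z ^ (\<beta> i - \<beta> 1))" for z :: "real \<times> real"
  have fact: "bipoly s a \<alpha> \<beta> (fst z) (snd z) = fst z ^ \<alpha> 1 * snd z ^ \<beta> 1 * (a 1 + R z)" for z
  proof -
    have "{1..s} = insert 1 {2..s}" using s_pos by auto
    then have "bipoly s a \<alpha> \<beta> (fst z) (snd z) = a 1 * fst z ^ \<alpha> 1 * snd z ^ \<beta> 1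
        + (\<Sum>i=2..s. a i * fst z ^ \<alpha> i * snd z ^ \<beta> i)"
      by (simp add: bipoly_def)
    also have "(\<Sum>i=2..s. a i * fst z ^ \<alpha> i * snd z ^ \<beta> i)
        = (\<Sum>i=2..s. fst z ^ \<alpha> 1 * snd z ^ \<beta> 1 * (a i * fst z ^ (\<alpha> i - \<alpha> 1) * snd z ^ (\<beta> i - \<beta> 1)))"
    proof (rule sum.cong)
      fix i assume "i \<in> {2..s}"
      then have d: "\<alpha> i = \<alpha> 1 + (\<alpha> i - \<alpha> 1)" "\<beta> i = \<beta> 1 + (\<beta> i - \<beta> 1)" using dom by auto
      show "a i * fst z ^ \<alpha> i * snd z ^ \<beta> i = fst z ^ \<alpha> 1 * snd z ^ \<beta> 1 * (a i * fst z ^ (\<alpha> i - \<alpha> 1) * snd z ^ (\<beta> i - \<beta> 1))"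
        by (subst d(1), subst d(2), simp only: power_add, simp add: algebra_simps)
    qed simp
    finally show ?thesis by (simp add: R_def sum_distrib_left algebra_simps)
  qed
  have R0: "R (0,0) = 0"
    unfolding R_def by (rule sum.neutral) (use dom in auto)
  have Rc: "continuous_on UNIV R"
    unfolding R_def by (intro continuous_intros)
  have a1: "a 1 \<noteq> 0" using a_nz s_pos by auto
  have rsmall: "\<forall>\<^sub>F z in nhds (0,0). \<bar>R z\<bar> < \<bar>a 1\<bar>"
  proof -
    have "open {z. \<bar>R z\<bar> < \<bar>a 1\<bar>}"
      by (intro open_Collect_less continuous_intros Rc continuous_on_const) 
    moreover have "(0,0) \<in> {z. \<bar>R z\<bar> < \<bar>a 1\<bar>}" using R0 a1 by simp
    ultimately show ?thesis using eventually_nhds by blast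
  qed
  have "(\<forall>\<^sub>F z in nhds (0,0). (\<lambda>z. bipoly s a \<alpha> \<beta> (fst z) (snd z)) z \<ge> (\<lambda>z. bipoly s a \<alpha> \<beta> (fst z) (snd z)) (0,0))
      \<longleftrightarrow> a 1 > 0 \<and> even (\<alpha> 1) \<and> even (\<beta> 1)"
    by (rule analytic[OF rsmall a1]) (use fact p00 in auto)
  then show ?thesis by (simp add: local_min_at_origin_def)
qed
end
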